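(* Let $S$ be a Riemannian circle and consider a tightening sequence for $S$ with tightened segments $Q_i$ and maps $\pi^{(i)}\colon S\to S_i$. If the tightening sequence is completely disjoint and $\sum_{i=0}^\infty|Q_i|<|S|$, then $\delta(x,y)=\lim_{i\to\infty}d_{S_i}(\pi^{(i)}(x),\pi^{(i)}(y))$ (for $x,y\in S$) is a well-defined pseudometric on $S$, and the induced metric quotient $S_\infty$ of $(S,\delta)$ is a Riemannian circle of length $\lim_{i\to\infty}|S_i|$.
   Context: A Riemannian circle is a circle with its length metric, of length $|S|$. Tightening sequence for $S$: Riemannian circles $S_0=S,S_1,\dots$, spaces $P_0,P_1,\dots$ (each a compact interval or Riemannian circle), maps $\iota_i\colon P_i\hookrightarrow S_i$, $\varphi_i\colon P_i\to S_{i+1}$, such that for each $i$ either (a) $\iota_i,\varphi_i$ are continuous unit-speed paths, $\varphi_i$ is injective on the interior $\mathring P_i$, $|P_i|\ge|S|/2$, $|S_{i+1}|<|S_i|$; or (b) $P_i=S_i=S_{i+1}$ with $\iota_i,\varphi_i$ identities. In case (a), $Q_i=S_i\setminus\iota_i(\mathring P_i)$ and $\bar Q_i=S_{i+1}\setminus\varphi_i(\mathring P_i)$ are closed segments with $|\bar Q_i|<|Q_i|$; in case (b) $Q_i=\bar Q_i=\emptyset$. The map $\pi_i\colon S_i\to S_{i+1}$ is $\varphi_i\circ\iota_i^{-1}$ on $\iota_i(P_i)$ and affine from $Q_i$ onto $\bar Q_i$; $\pi^{(i)}=\pi_{i-1}\circ\cdots\circ\pi_0$ ($\pi^{(0)}=\mathrm{id}$).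 Let $\mathring P_{0,0}=S$, $\mathring P_{0,j+1}=\mathring P_{0,j}\cap\iota_j(\mathring P_j)$ (viewing $\mathring P_{0,j}\subset S_j$). The sequence is completely disjoint if $Q_i\subset\mathring P_{0,i}$ in $S_i$ for every $i$. *)

theory Defs
  imports "HOL-Analysis.Analysis"
begin

(* Model of a Riemannian circle of length L > 0: the round circle of radius L/(2 pi) in the
   complex plane, equipped with its length (arc-length) metric. *)
definition rcircle :: "real \<Rightarrow> complex set" where
  "rcircle L = sphere 0 (L / (2 * pi))"

definition cdist :: "real \<Rightarrow> complex \<Rightarrow> complex \<Rightarrow> real" where
  "cdist L z w = L / (2 * pi) * \<bar>Arg (z / w)\<bar>"

definition curve_length :: "('a \<Rightarrow> 'a \<Rightarrow> real) \<Rightarrow> (real \<Rightarrow> 'a) \<Rightarrow> real \<Rightarrow> real \<Rightarrow> ereal" where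
  "curve_length d \<gamma> s t =
     (SUP np \<in> {(n, p). p 0 = s \<and> p n = t \<and> (\<forall>k<n. p k \<le> p (Suc k))}.
        ereal (\<Sum>k<fst np. d (\<gamma> (snd np k)) (\<gamma> (snd np (Suc k)))))"

definition unit_speed_path :: "real \<Rightarrow> real set \<Rightarrow> (real \<Rightarrow> complex) \<Rightarrow> bool" where
  "unit_speed_path L A \<gamma> \<longleftrightarrow> continuous_on A \<gamma> \<and> \<gamma> ` A \<subseteq> rcircle L \<and>
     (\<forall>s\<in>A. \<forall>t\<in>A. s \<le> t \<longrightarrow> curve_length (cdist L) \<gamma> s t = ereal (t - s))"

(* Data of a tightening sequence:
   L i = |S_i| (S_i = rcircle (L i)), tight i = case (a) holds at step i (otherwise case (b)),
   in case (a): P_i = [0, a i], iota_i = io i, phi_i = ph i;  pr i = pi_i : S_i -> S_{i+1}. *)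

definition Qset :: "(nat \<Rightarrow> real) \<Rightarrow> (nat \<Rightarrow> bool) \<Rightarrow> (nat \<Rightarrow> real) \<Rightarrow> (nat \<Rightarrow> real \<Rightarrow> complex) \<Rightarrow> nat \<Rightarrow> complex set" where
  "Qset L tight a io i = (if tight i then rcircle (L i) - io i ` {0<..<a i} else {})"

definition Qbarset :: "(nat \<Rightarrow> real) \<Rightarrow> (nat \<Rightarrow> bool) \<Rightarrow> (nat \<Rightarrow> real) \<Rightarrow> (nat \<Rightarrow> real \<Rightarrow> complex) \<Rightarrow> nat \<Rightarrow> complex set" where
  "Qbarset L tight a ph i = (if tight i then rcircle (L (Suc i)) - ph i ` {0<..<a i} else {})"

definition Qlen :: "(nat \<Rightarrow> real) \<Rightarrow> (nat \<Rightarrow> bool) \<Rightarrow> (nat \<Rightarrow> real) \<Rightarrow> nat \<Rightarrow> real" where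
  "Qlen L tight a i = (if tight i then L i - a i else 0)"

definition Qbarlen :: "(nat \<Rightarrow> real) \<Rightarrow> (nat \<Rightarrow> bool) \<Rightarrow> (nat \<Rightarrow> real) \<Rightarrow> nat \<Rightarrow> real" where
  "Qbarlen L tight a i = (if tight i then L (Suc i) - a i else 0)"

definition tightening_step ::
  "(nat \<Rightarrow> real) \<Rightarrow> (nat \<Rightarrow> bool) \<Rightarrow> (nat \<Rightarrow> real) \<Rightarrow> (nat \<Rightarrow> real \<Rightarrow> complex) \<Rightarrow>
   (nat \<Rightarrow> real \<Rightarrow> complex) \<Rightarrow> (nat \<Rightarrow> complex \<Rightarrow> complex) \<Rightarrow> nat \<Rightarrow> bool" where
  "tightening_step L tight a io ph pr i \<longleftrightarrow>
     (if tight i then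
        \<comment> \<open>case (a)\<close>
        0 < a i \<and> a i \<ge> L 0 / 2 \<and>
        unit_speed_path (L i) {0..a i} (io i) \<and> inj_on (io i) {0..a i} \<and>
        unit_speed_path (L (Suc i)) {0..a i} (ph i) \<and> inj_on (ph i) {0<..<a i} \<and>
        L (Suc i) < L i \<and>
        \<comment> \<open>Q_i, Qbar_i closed segments with |Qbar_i| < |Q_i|\<close>
        (\<exists>\<alpha> \<beta>. unit_speed_path (L i) {0..Qlen L tight a i} \<alpha> \<and>
                 \<alpha> ` {0..Qlen L tight a i} = Qset L tight a io i \<and>
                 unit_speed_path (L (Suc i)) {0..Qbarlen L tight a i} \<beta> \<and>
                 \<beta> ` {0..Qbarlen L tight a i} = Qbarset L tight a ph i \<and>
                 0 \<le> Qbarlen L tight a i \<and> Qbarlen L tight a i < Qlen L tight a i \<and>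
                 \<comment> \<open>pi_i = phi_i o iota_i^-1 on iota_i(P_i) and affine from Q_i onto Qbar_i\<close>
                 (\<forall>t\<in>{0..a i}. pr i (io i t) = ph i t) \<and>
                 (\<forall>t\<in>{0..Qlen L tight a i}.
                    pr i (\<alpha> t) = \<beta> (t * Qbarlen L tight a i / Qlen L tight a i)))
      else
        \<comment> \<open>case (b): P_i = S_i = S_{i+1}, all maps identities\<close>
        L (Suc i) = L i \<and> (\<forall>z\<in>rcircle (L i). pr i z = z))"

definition tightening_seq ::
  "(nat \<Rightarrow> real) \<Rightarrow> (nat \<Rightarrow> bool) \<Rightarrow> (nat \<Rightarrow> real) \<Rightarrow> (nat \<Rightarrow> real \<Rightarrow> complex) \<Rightarrow>
   (nat \<Rightarrow> real \<Rightarrow> complex) \<Rightarrow> (nat \<Rightarrow> complex \<Rightarrow> complex) \<Rightarrow> bool" where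
  "tightening_seq L tight a io ph pr \<longleftrightarrow>
     (\<forall>i. 0 < L i) \<and> (\<forall>i. tightening_step L tight a io ph pr i)"

primrec pic :: "(nat \<Rightarrow> complex \<Rightarrow> complex) \<Rightarrow> nat \<Rightarrow> complex \<Rightarrow> complex" where
  "pic pr 0 = id"
| "pic pr (Suc i) = pr i \<circ> pic pr i"

definition Iset :: "(nat \<Rightarrow> real) \<Rightarrow> (nat \<Rightarrow> bool) \<Rightarrow> (nat \<Rightarrow> real) \<Rightarrow> (nat \<Rightarrow> real \<Rightarrow> complex) \<Rightarrow> nat \<Rightarrow> complex set" where
  "Iset L tight a io i = (if tight i then io i ` {0<..<a i} else rcircle (L i))"

(* P_{0,j}^circ, viewed as a subset of S_j (transported by the maps pi) *)
primrec P0 :: "(nat \<Rightarrow> real) \<Rightarrow> (nat \<Rightarrow> bool) \<Rightarrow> (nat \<Rightarrow> real) \<Rightarrow> (nat \<Rightarrow> real \<Rightarrow> complex) \<Rightarrow>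
   (nat \<Rightarrow> complex \<Rightarrow> complex) \<Rightarrow> nat \<Rightarrow> complex set" where
  "P0 L tight a io pr 0 = rcircle (L 0)"
| "P0 L tight a io pr (Suc j) = pr j ` (P0 L tight a io pr j \<inter> Iset L tight a io j)"

definition completely_disjoint ::
  "(nat \<Rightarrow> real) \<Rightarrow> (nat \<Rightarrow> bool) \<Rightarrow> (nat \<Rightarrow> real) \<Rightarrow> (nat \<Rightarrow> real \<Rightarrow> complex) \<Rightarrow>
   (nat \<Rightarrow> complex \<Rightarrow> complex) \<Rightarrow> bool" where
  "completely_disjoint L tight a io pr \<longleftrightarrow> (\<forall>i. Qset L tight a io i \<subseteq> P0 L tight a io pr i)"

definition pseudometric_on :: "'a set \<Rightarrow> ('a \<Rightarrow> 'a \<Rightarrow> real) \<Rightarrow> bool" where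
  "pseudometric_on X d \<longleftrightarrow>
     (\<forall>x\<in>X. d x x = 0) \<and> (\<forall>x\<in>X. \<forall>y\<in>X. 0 \<le> d x y \<and> d x y = d y x) \<and>
     (\<forall>x\<in>X. \<forall>y\<in>X. \<forall>z\<in>X. d x z \<le> d x y + d y z)"

definition delta :: "(nat \<Rightarrow> real) \<Rightarrow> (nat \<Rightarrow> complex \<Rightarrow> complex) \<Rightarrow> complex \<Rightarrow> complex \<Rightarrow> real" where
  "delta L pr x y = lim (\<lambda>i. cdist (L i) (pic pr i x) (pic pr i y))"

end

theory Submission
  imports Defs "HOL-Analysis.Analysis"
begin


definition ad :: "real \<Rightarrow> real" where "ad \<theta> = \<bar>Arg (cis \<theta>)\<bar>"
definition pt :: "real \<Rightarrow> real \<Rightarrow> complex" where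
  "pt L x = rcis (L/(2*pi)) (2*pi*x/L)"
definition cd :: "real \<Rightarrow> real \<Rightarrow> real" where "cd L u = L/(2*pi) * ad (2*pi*u/L)"

lemma ad_le: "ad t \<le> \<bar>t\<bar>"
proof (cases "t \<in> {-pi<..pi}")
  case True then show ?thesis by (simp add: ad_def Arg_cis)
next
  case False
  then have "pi \<le> \<bar>t\<bar>" by auto
  moreover have "\<bar>Arg (cis t)\<bar> \<le> pi" using Arg_bounded[of "cis t"] by auto
  ultimately show ?thesis by (simp add: ad_def)
qed

lemma ad_eq: assumes "\<bar>t\<bar> \<le> pi" shows "ad t = \<bar>t\<bar>"
proof (cases "t = -pi")
  case True
  have "cis (-pi) = -1" by (simp add: cis_cnj[symmetric])
  moreover have "Arg (-1) = pi" by (simp add: Arg_eq_pi)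
  ultimately show ?thesis using True by (simp add: ad_def)
next
  case False
  then have "t \<in> {-pi<..pi}" using assms by auto
  then show ?thesis by (simp add: ad_def Arg_cis)
qed

lemma ad_cis: "cis a = cis b \<Longrightarrow> ad a = ad b" by (simp add: ad_def)

lemma ad_int: "ad (t + 2*pi* of_int k) = ad t"
proof -
  have "cis (t + 2 * pi * of_int k) = cis t * cis (2 * pi * of_int k)" by (simp add: cis_mult[symmetric])
  also have "cis (2 * pi * of_int k) = 1" by (rule cis_multiple_2pi) simp
  finally show ?thesis unfolding ad_def by simp
qed

lemma ad_minus: "ad (-t) = ad t"
  by (simp add: ad_def cis_cnj[symmetric] Arg_cnj)

lemma ad_triangle: "ad (a + b) \<le> ad a + ad b"
proof -
  have ea: "cis (Arg (cis a)) = cis a" by (simp add: cis_Arg)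
  have eb: "cis (Arg (cis b)) = cis b" by (simp add: cis_Arg)
  have "cis (a + b) = cis (Arg (cis a) + Arg (cis b))"
    by (simp add: cis_mult[symmetric] ea eb)
  then have "ad (a+b) = ad (Arg (cis a) + Arg (cis b))" by (rule ad_cis)
  also have "\<dots> \<le> \<bar>Arg (cis a) + Arg (cis b)\<bar>" by (rule ad_le)
  also have "\<dots> \<le> ad a + ad b" by (simp add: ad_def)
  finally show ?thesis .
qed

lemma ad_nonneg: "0 \<le> ad t" by (simp add: ad_def)

context fixes L :: real assumes Lpos: "0 < L" begin

lemma cd_le: "cd L u \<le> \<bar>u\<bar>"
proof -
  have "cd L u \<le> L/(2*pi) * \<bar>2*pi*u/L\<bar>" unfolding cd_def
    using Lpos by (intro mult_left_mono ad_le) auto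
  also have "\<dots> = \<bar>u\<bar>" using Lpos by (simp add: abs_mult)
  finally show ?thesis .
qed

lemma cd_eq: assumes "\<bar>u\<bar> \<le> L/2" shows "cd L u = \<bar>u\<bar>"
proof -
  have "\<bar>2*pi*u/L\<bar> \<le> pi" using assms Lpos pi_gt_zero
    by (simp add: abs_mult field_simps)
  then show ?thesis unfolding cd_def using Lpos by (simp add: ad_eq abs_mult)
qed

lemma cd_minus: "cd L (-u) = cd L u"
  unfolding cd_def using ad_minus[of "2*pi*u/L"] by simp

lemma cd_nonneg: "0 \<le> cd L u" unfolding cd_def using Lpos by (simp add: ad_nonneg)

lemma cd_int: "cd L (u + of_int k * L) = cd L u"
proof -
  have "2 * pi * (u + of_int k * L) / L = 2 * pi * u / L + 2 * pi * of_int k" using Lpos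
    by (simp add: field_simps)
  then show ?thesis unfolding cd_def by (simp add: ad_int)
qed

lemma cd_per: "cd L (u + L) = cd L u" "cd L (u - L) = cd L u"
  using cd_int[of u 1] cd_int[of u "-1"] by simp_all

lemma cd_triangle: "cd L (u + v) \<le> cd L u + cd L v"
proof -
  have e: "2 * pi * (u + v) / L = 2 * pi * u / L + 2 * pi * v / L" by (simp add: add_divide_distrib distrib_left)
  have "L/(2*pi) * ad (2 * pi * u / L + 2 * pi * v / L) \<le> L/(2*pi) * (ad (2 * pi * u / L) + ad (2 * pi * v / L))"
    using Lpos by (intro mult_left_mono ad_triangle) auto
  then show ?thesis unfolding cd_def e by (simp add: distrib_left)
qed

lemma cd_formula: assumes "0 \<le> u" "u \<le> L" shows "cd L u = min u (L - u)"
proof (cases "u \<le> L/2")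
  case True then show ?thesis using cd_eq[of u] assms by auto
next
  case False
  then have "cd L (u - L) = L - u" using cd_eq[of "u - L"] assms by auto
  then show ?thesis using cd_per(2)[of u] False by auto
qed

lemma pt_in: "pt L x \<in> rcircle L"
  using Lpos by (simp add: pt_def rcircle_def norm_mult)

lemma pt_ne0: "pt L x \<noteq> 0" using Lpos by (simp add: pt_def)

lemma pt_cdist: "cdist L (pt L u) (pt L v) = cd L (u - v)"
proof -
  have "pt L u / pt L v = cis (2 * pi * u / L - 2 * pi * v / L)" using Lpos
    by (simp add: pt_def rcis_def cis_divide[symmetric])
  also have "2 * pi * u / L - 2 * pi * v / L = 2 * pi * (u - v) / L" by (simp add: diff_divide_distrib right_diff_distrib)
  finally show ?thesis by (simp add: cdist_def cd_def ad_def)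
qed

lemma pt_int: "pt L (x + of_int k * L) = pt L x"
proof -
  have "2 * pi * (x + of_int k * L) / L = 2 * pi * x / L + 2 * pi * of_int k" using Lpos
    by (simp add: field_simps)
  moreover have "cis (2 * pi * x / L + 2 * pi * of_int k) = cis (2 * pi * x / L)"
    using cis_mult[of "2 * pi * x / L" "2 * pi * of_int k", symmetric] cis_multiple_2pi[of "of_int k"] by simp
  ultimately show ?thesis by (simp add: pt_def rcis_def)
qed

lemma pt_per: "pt L (x + L) = pt L x" "pt L (x - L) = pt L x"
  using pt_int[of x 1] pt_int[of x "-1"] by simp_all

lemma circle_pt: assumes "z \<in> rcircle L" shows "\<exists>x. z = pt L x"
proof -
  have nz: "norm z = L/(2*pi)" using assms Lpos by (simp add: rcircle_def)
  then have z0: "z \<noteq> 0" using Lpos by auto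
  have "pt L (L/(2*pi) * Arg z) = rcis (norm z) (Arg z)"
    using Lpos nz by (simp add: pt_def)
  also have "\<dots> = z" by (rule rcis_cmod_Arg)
  finally show ?thesis by metis
qed

lemma circle_pt01: assumes "z \<in> rcircle L" shows "\<exists>x\<in>{0..<L}. z = pt L x"
proof -
  obtain x where x: "z = pt L x" using circle_pt assms by blast
  define k where "k = \<lfloor>x/L\<rfloor>"
  have "of_int k \<le> x/L" "x/L < of_int k + 1" unfolding k_def by linarith+
  then have "of_int k * L \<le> x" "x < of_int k * L + L" using Lpos by (simp_all add: field_simps)
  moreover have "z = pt L (x - of_int k * L)" using pt_int[of "x - of_int k * L" k] x by simp
  ultimately show ?thesis by (intro bexI[of _ "x - of_int k * L"]) auto
qed

lemma cdist_self: "z \<noteq> 0 \<Longrightarrow> cdist L z z = 0" by (simp add: cdist_def)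

lemma pt_eq_cd: "pt L u = pt L v \<Longrightarrow> cd L (u - v) = 0"
  using pt_cdist[of u v] cdist_self[OF pt_ne0[of v]] by simp

lemma pt_inj: assumes "pt L u = pt L v" "\<bar>u - v\<bar> < L" shows "u = v"
proof -
  have c: "cd L (u - v) = 0" using pt_eq_cd assms by simp
  show ?thesis
  proof (cases "u \<le> v")
    case True
    have "cd L (v - u) = 0" using c cd_minus[of "u - v"] by simp
    then show ?thesis using cd_formula[of "v - u"] True assms(2) by (auto simp: min_def split: if_splits)
  next
    case False
    then show ?thesis using cd_formula[of "u - v"] c assms(2) by (auto simp: min_def split: if_splits)
  qed
qed

end


lemma usp_lip:
  assumes "unit_speed_path L A \<gamma>" "s \<in> A" "t \<in> A" "s \<le> t"
  shows "cdist L (\<gamma> s) (\<gamma> t) \<le> t - s"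
proof -
  let ?P = "{(n, p). p 0 = s \<and> p n = t \<and> (\<forall>k<n. p k \<le> p (Suc k))}"
  let ?p = "\<lambda>k::nat. if k = 0 then s else t"
  have mem: "(1::nat, ?p) \<in> ?P" using assms(4) by auto
  have "ereal (\<Sum>k<fst (1::nat, ?p). cdist L (\<gamma> (snd (1::nat, ?p) k)) (\<gamma> (snd (1::nat, ?p) (Suc k))))
        \<le> curve_length (cdist L) \<gamma> s t"
    unfolding curve_length_def by (rule SUP_upper[OF mem])
  also have "\<dots> = ereal (t - s)" using assms unfolding unit_speed_path_def by auto
  finally show ?thesis by simp
qed

lemma part_bounds:
  assumes "p 0 = s" "p n = t" "\<forall>k<n. p k \<le> p (Suc (k::nat))" "k \<le> n"
  shows "s \<le> p k \<and> p k \<le> (t::real)"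
proof -
  have A: "\<forall>k j. k \<le> j \<longrightarrow> j \<le> n \<longrightarrow> p k \<le> p j"
  proof (intro allI impI)
    fix k j assume "k \<le> j" "j \<le> n"
    then show "p k \<le> p j"
    proof (induction j)
      case 0 then show ?case by simp
    next
      case (Suc j)
      then show ?case using assms(3) by (cases "k = Suc j") (auto intro: order_trans)
    qed
  qed
  show ?thesis using A[rule_format, of 0 k] A[rule_format, of k n] assms by auto
qed

lemma curve_length_le:
  assumes "\<And>n p. p 0 = s \<Longrightarrow> p n = t \<Longrightarrow> (\<forall>k<n. p k \<le> p (Suc k)) \<Longrightarrow>
     (\<Sum>k<n. d (\<gamma> (p k)) (\<gamma> (p (Suc k)))) \<le> B"
  shows "curve_length d \<gamma> s t \<le> ereal B"
  unfolding curve_length_def by (rule SUP_least) (auto intro: assms)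

lemma chain_lip:
  fixes f :: "real \<Rightarrow> real"
  assumes d: "d > 0"
    and loc: "\<And>x y. lo \<le> x \<Longrightarrow> x \<le> y \<Longrightarrow> y \<le> hi \<Longrightarrow> y - x < d \<Longrightarrow> f y - f x \<le> y - x"
    and xy: "lo \<le> x" "x \<le> y" "y \<le> hi"
  shows "f y - f x \<le> y - x"
proof -
  have I: "\<forall>x y. lo \<le> x \<longrightarrow> x \<le> y \<longrightarrow> y \<le> hi \<longrightarrow> y - x < real n * (d/2) \<longrightarrow> f y - f x \<le> y - x" for n
  proof (induction n)
    case 0 then show ?case using d by auto
  next
    case (Suc n)
    show ?case
    proof (intro allI impI)
      fix x y assume h: "lo \<le> x" "x \<le> y" "y \<le> hi" "y - x < real (Suc n) * (d/2)"
      show "f y - f x \<le> y - x"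
      proof (cases "y - x < d")
        case True then show ?thesis using loc h by auto
      next
        case False
        define m where "m = y - d/2"
        have "m - x < real n * (d/2)" using h(4) unfolding m_def by (simp add: algebra_simps)
        moreover have "x \<le> m" "m \<le> hi" using h False d unfolding m_def by auto
        ultimately have "f m - f x \<le> m - x" using Suc.IH h by blast
        moreover have "f y - f m \<le> y - m" using loc[of m y] h False d unfolding m_def by auto
        ultimately show ?thesis by linarith
      qed
    qed
  qed
  have "\<exists>n. y - x < real n * (d/2)" using reals_Archimedean3[of "d/2"] d by (simp only: half_gt_zero_iff)
  then obtain n where "y - x < real n * (d/2)" by blast
  then show ?thesis using I xy by blast
qed

lemma sign_lemma:
  fixes \<phi> :: "real \<Rightarrow> real"
  assumes a: "0 < a" and cont: "continuous_on {0..a} \<phi>" and inj: "inj_on \<phi> {0<..<a}"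
  shows "\<exists>\<sigma>. (\<sigma> = 1 \<or> \<sigma> = -1) \<and> (\<forall>x y. 0 < x \<longrightarrow> x < y \<longrightarrow> y < a \<longrightarrow> 0 < \<sigma> * (\<phi> y - \<phi> x))"
proof -
  have same: "\<phi> x < \<phi> y \<longleftrightarrow> \<phi> x' < \<phi> y'"
    if h: "0 < x" "x < y" "y < a" "0 < x'" "x' < y'" "y' < a" for x y x' y'
  proof -
    define h where "h = (\<lambda>l. \<phi> (y + l * (y' - y)) - \<phi> (x + l * (x' - x)))"
    have inr: "0 < x + l * (x' - x) \<and> x + l * (x' - x) < y + l * (y' - y) \<and> y + l * (y' - y) < a"
      if "0 \<le> l" "l \<le> 1" for l
    proof -
      have "x + l * (x' - x) = (1 - l) * x + l * x'" by (simp add: algebra_simps)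
      moreover have "y + l * (y' - y) = (1 - l) * y + l * y'" by (simp add: algebra_simps)
      moreover have "0 < (1 - l) * x + l * x'"
      proof (cases "l = 1")
        case True then show ?thesis using h by simp
      next
        case False then show ?thesis using that h by (intro add_pos_nonneg) auto
      qed
      moreover have "(1 - l) * x + l * x' < (1 - l) * y + l * y'"
      proof (cases "l = 1")
        case True then show ?thesis using h by simp
      next
        case False
        have "(1 - l) * x < (1 - l) * y" using False that h by (intro mult_strict_left_mono) auto
        moreover have "l * x' \<le> l * y'" using that h by (intro mult_left_mono) auto
        ultimately show ?thesis by linarith
      qed
      moreover have "(1 - l) * y + l * y' < a"
      proof (cases "l = 1")
        case True then show ?thesis using h by simp
      next
        case False
        have "(1 - l) * y < (1 - l) * a" using False that h by (intro mult_strict_left_mono) auto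
        moreover have "l * y' \<le> l * a" using that h by (intro mult_left_mono) auto
        ultimately show ?thesis by (simp add: algebra_simps)
      qed
      ultimately show ?thesis by simp
    qed
    have sub: "y + l * (y' - y) \<in> {0..a} \<and> x + l * (x' - x) \<in> {0..a}" if "l \<in> {0..1}" for l
      using inr[of l] that by auto
    have hc: "continuous_on {0..1} h" unfolding h_def
    proof (intro continuous_on_diff)
      show "continuous_on {0..1} (\<lambda>l. \<phi> (y + l * (y' - y)))"
        by (rule continuous_on_compose2[OF cont]) (use sub in \<open>auto intro!: continuous_intros\<close>)
      show "continuous_on {0..1} (\<lambda>l. \<phi> (x + l * (x' - x)))"
        by (rule continuous_on_compose2[OF cont]) (use sub in \<open>auto intro!: continuous_intros\<close>)
    qed
    have hne: "h l \<noteq> 0" if "0 \<le> l" "l \<le> 1" for l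
    proof
      assume "h l = 0"
      then have "\<phi> (y + l * (y' - y)) = \<phi> (x + l * (x' - x))" unfolding h_def by simp
      moreover have "y + l * (y' - y) \<in> {0<..<a}" "x + l * (x' - x) \<in> {0<..<a}" using inr[OF that] by auto
      ultimately have "y + l * (y' - y) = x + l * (x' - x)" using inj by (auto dest: inj_onD)
      then show False using inr[OF that] by simp
    qed
    have h0: "h 0 = \<phi> y - \<phi> x" "h 1 = \<phi> y' - \<phi> x'" unfolding h_def by simp_all
    show ?thesis
    proof (rule ccontr)
      assume "\<not> ?thesis"
      then consider "h 0 > 0" "h 1 \<le> 0" | "h 0 \<le> 0" "h 1 > 0" unfolding h0 by linarith
      then show False
      proof cases
        case 1
        then obtain l where "0 \<le> l" "l \<le> 1" "h l = 0" using IVT2'[of h 1 0 0] hc by auto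
        then show False using hne by auto
      next
        case 2
        then obtain l where "0 \<le> l" "l \<le> 1" "h l = 0" using IVT'[of h 0 0 1] hc by auto
        then show False using hne by auto
      qed
    qed
  qed
  have ne: "\<phi> (a/2) \<noteq> \<phi> (3*a/4)"
  proof
    assume "\<phi> (a/2) = \<phi> (3*a/4)"
    then have "a/2 = 3*a/4" using inj a by (auto dest: inj_onD)
    then show False using a by simp
  qed
  define \<sigma> where "\<sigma> = (if \<phi> (a/2) < \<phi> (3*a/4) then 1 else (-1::real))"
  have "0 < \<sigma> * (\<phi> y - \<phi> x)" if "0 < x" "x < y" "y < a" for x y
  proof -
    have e: "\<phi> x < \<phi> y \<longleftrightarrow> \<phi> (a/2) < \<phi> (3*a/4)" using same[of x y "a/2" "3*a/4"] that a by auto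
    have "\<phi> x \<noteq> \<phi> y" using that inj by (auto dest: inj_onD)
    then show ?thesis using e ne unfolding \<sigma>_def by auto
  qed
  then show ?thesis unfolding \<sigma>_def by (intro exI[of _ \<sigma>]) (auto simp: \<sigma>_def)
qed



lemma lift_usp:
  assumes L: "0 < L" and a: "0 < a" and usp: "unit_speed_path L {0..a} \<gamma>"
    and inj: "inj_on \<gamma> {0<..<a}"
  shows "\<exists>x0 \<sigma>. (\<sigma> = 1 \<or> \<sigma> = -1) \<and> (\<forall>t\<in>{0..a}. \<gamma> t = pt L (x0 + \<sigma> * t))"
proof -
  define r where "r = L / (2*pi)"
  have r: "0 < r" using L unfolding r_def by simp
  have contg: "continuous_on {0..a} \<gamma>" and img: "\<gamma> ` {0..a} \<subseteq> rcircle L"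
    using usp unfolding unit_speed_path_def by auto
  have nrm: "norm (\<gamma> t) = r" if "t \<in> {0..a}" for t
    using img that unfolding rcircle_def r_def by (auto simp: image_subset_iff)
  have "continuous_on {0..a} (\<lambda>t. \<gamma> t / complex_of_real r)"
    by (intro continuous_intros contg) (use r in auto)
  moreover have "contractible {0..a::real}" by (intro convex_imp_contractible) simp
  moreover have "\<And>t. t \<in> {0..a} \<Longrightarrow> \<gamma> t / complex_of_real r \<noteq> 0" using nrm r by fastforce
  ultimately obtain g where contlog: "continuous_on {0..a} g"
    and g: "\<And>t. t \<in> {0..a} \<Longrightarrow> \<gamma> t / complex_of_real r = exp (g t)"
    using continuous_logarithm_on_contractible by blast
  define \<phi> where "\<phi> t = r * Im (g t)" for t
  have contphi: "continuous_on {0..a} \<phi>" unfolding \<phi>_def by (intro continuous_intros contlog)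
  have gphi: "\<gamma> t = pt L (\<phi> t)" if t: "t \<in> {0..a}" for t
  proof -
    have "norm (\<gamma> t / complex_of_real r) = 1" using nrm[OF t] r by (simp add: norm_divide)
    then have "norm (exp (g t)) = 1" using g[OF t] by simp
    then have "exp (Re (g t)) = 1" by (simp only: norm_exp_eq_Re)
    then have "exp (g t) = cis (Im (g t))" by (simp add: exp_eq_polar)
    then have "\<gamma> t = complex_of_real r * cis (Im (g t))" using g[OF t] r
      by (simp add: divide_eq_eq mult.commute)
    moreover have "2 * pi * \<phi> t / L = Im (g t)" unfolding \<phi>_def r_def using L by simp
    ultimately show ?thesis by (simp add: pt_def rcis_def r_def)
  qed
  have injphi: "inj_on \<phi> {0<..<a}"
  proof (rule inj_onI)
    fix x y assume "x \<in> {0<..<a}" "y \<in> {0<..<a}" "\<phi> x = \<phi> y"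
    then have "\<gamma> x = \<gamma> y" using gphi[of x] gphi[of y] by auto
    then show "x = y" using inj \<open>x \<in> _\<close> \<open>y \<in> _\<close> by (auto dest: inj_onD)
  qed
  obtain \<sigma> where sg: "\<sigma> = 1 \<or> \<sigma> = -1"
    and mono: "\<And>x y. 0 < x \<Longrightarrow> x < y \<Longrightarrow> y < a \<Longrightarrow> 0 < \<sigma> * (\<phi> y - \<phi> x)"
    using sign_lemma[OF a contphi injphi] by blast
  have absmono: "\<bar>\<phi> y - \<phi> x\<bar> = \<sigma> * (\<phi> y - \<phi> x)" if "0 < x" "x \<le> y" "y < a" for x y
  proof (cases "x = y")
    case False then have "0 < \<sigma> * (\<phi> y - \<phi> x)" using mono that by auto
    then show ?thesis using sg by (auto simp: abs_if)
  qed simp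
  have cdg: "cdist L (\<gamma> x) (\<gamma> y) = cd L (\<phi> y - \<phi> x)" if "x \<in> {0..a}" "y \<in> {0..a}" for x y
    using gphi[OF that(1)] gphi[OF that(2)] pt_cdist[OF L] cd_minus[OF L, of "\<phi> y - \<phi> x"] by simp
  have lower: "t - s \<le> \<sigma> * (\<phi> t - \<phi> s)" if st: "0 < s" "s \<le> t" "t < a" for s t
  proof -
    have "curve_length (cdist L) \<gamma> s t \<le> ereal (\<sigma> * (\<phi> t - \<phi> s))"
    proof (rule curve_length_le)
      fix n and p :: "nat \<Rightarrow> real"
      assume p: "p 0 = s" "p n = t" "\<forall>k<n. p k \<le> p (Suc k)"
      have pb: "s \<le> p k \<and> p k \<le> t" if "k \<le> n" for k using part_bounds[OF p that] .
      have "(\<Sum>k<n. cdist L (\<gamma> (p k)) (\<gamma> (p (Suc k)))) \<le> (\<Sum>k<n. \<sigma> * (\<phi> (p (Suc k)) - \<phi> (p k)))"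
      proof (rule sum_mono)
        fix k assume "k \<in> {..<n}"
        then have k: "k < n" by simp
        have b: "s \<le> p k" "p (Suc k) \<le> t" "p k \<le> p (Suc k)" using pb[of k] pb[of "Suc k"] k p(3) by auto
        have "cdist L (\<gamma> (p k)) (\<gamma> (p (Suc k))) = cd L (\<phi> (p (Suc k)) - \<phi> (p k))"
          using b st by (intro cdg) auto
        also have "\<dots> \<le> \<bar>\<phi> (p (Suc k)) - \<phi> (p k)\<bar>" by (rule cd_le[OF L])
        also have "\<dots> = \<sigma> * (\<phi> (p (Suc k)) - \<phi> (p k))" using b st by (intro absmono) auto
        finally show "cdist L (\<gamma> (p k)) (\<gamma> (p (Suc k))) \<le> \<sigma> * (\<phi> (p (Suc k)) - \<phi> (p k))" .
      qed
      also have "\<dots> = \<sigma> * (\<phi> (p n) - \<phi> (p 0))"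
        using sum_lessThan_telescope[of "\<lambda>k. \<phi> (p k)" n] by (simp add: sum_distrib_left[symmetric])
      finally show "(\<Sum>k<n. cdist L (\<gamma> (p k)) (\<gamma> (p (Suc k)))) \<le> \<sigma> * (\<phi> t - \<phi> s)" using p by simp
    qed
    moreover have "curve_length (cdist L) \<gamma> s t = ereal (t - s)"
      using usp st unfolding unit_speed_path_def by auto
    ultimately show ?thesis by simp
  qed
  have "uniformly_continuous_on {0..a} \<phi>" by (rule compact_uniformly_continuous[OF contphi]) simp
  then obtain d where d: "d > 0" and dd: "\<And>x y. x \<in> {0..a} \<Longrightarrow> y \<in> {0..a} \<Longrightarrow> dist y x < d \<Longrightarrow> dist (\<phi> y) (\<phi> x) < L/2"
    unfolding uniformly_continuous_on_def using L by (metis half_gt_zero)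
  have loc: "\<sigma> * \<phi> y - \<sigma> * \<phi> x \<le> y - x" if h: "0 \<le> x" "x \<le> y" "y \<le> a" "y - x < d" for x y
  proof -
    have "\<bar>\<phi> y - \<phi> x\<bar> < L/2" using dd[of x y] h by (auto simp: dist_real_def)
    then have "\<bar>\<phi> y - \<phi> x\<bar> = cd L (\<phi> y - \<phi> x)" using cd_eq[OF L] by simp
    also have "\<dots> = cdist L (\<gamma> x) (\<gamma> y)" using h by (intro cdg[symmetric]) auto
    also have "\<dots> \<le> y - x" using h by (intro usp_lip[OF usp]) auto
    finally have "\<bar>\<phi> y - \<phi> x\<bar> \<le> y - x" .
    moreover have "\<sigma> * (\<phi> y - \<phi> x) \<le> \<bar>\<phi> y - \<phi> x\<bar>" using sg by auto
    ultimately show "\<sigma> * \<phi> y - \<sigma> * \<phi> x \<le> y - x" by (simp add: right_diff_distrib)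
  qed
  have upper: "\<sigma> * (\<phi> t - \<phi> s) \<le> t - s" if st: "0 \<le> s" "s \<le> t" "t \<le> a" for s t
  proof -
    have "\<sigma> * \<phi> t - \<sigma> * \<phi> s \<le> t - s" using chain_lip[OF d, of 0 a "\<lambda>x. \<sigma> * \<phi> x"] loc st by blast
    then show ?thesis by (simp add: right_diff_distrib)
  qed
  define x0 where "x0 = \<phi> (a/2) - \<sigma> * (a/2)"
  have inner: "\<phi> t - \<sigma> * t = x0" if "t \<in> {0<..<a}" for t
  proof (cases "a/2 \<le> t")
    case True
    then have "\<sigma> * (\<phi> t - \<phi> (a/2)) = t - a/2"
      using lower[of "a/2" t] upper[of "a/2" t] that a by auto
    then have "\<sigma> * (\<sigma> * (\<phi> t - \<phi> (a/2))) = \<sigma> * (t - a/2)" by simp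
    then show ?thesis using sg unfolding x0_def by (auto simp: algebra_simps)
  next
    case False
    then have "\<sigma> * (\<phi> (a/2) - \<phi> t) = a/2 - t"
      using lower[of t "a/2"] upper[of t "a/2"] that a by auto
    then have "\<sigma> * (\<sigma> * (\<phi> (a/2) - \<phi> t)) = \<sigma> * (a/2 - t)" by simp
    then show ?thesis using sg unfolding x0_def by (auto simp: algebra_simps)
  qed
  have all: "\<phi> t - \<sigma> * t = x0" if "t \<in> {0..a}" for t
  proof (rule continuous_constant_on_closure[where S = "{0<..<a}" and f = "\<lambda>t. \<phi> t - \<sigma> * t" and x = t])
    show "continuous_on (closure {0<..<a}) (\<lambda>t. \<phi> t - \<sigma> * t)"
      using a by (simp, intro continuous_intros contphi)
    show "t \<in> closure {0<..<a}" using a that by simp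
  qed (rule inner)
  show ?thesis
  proof (intro exI conjI ballI)
    show "\<sigma> = 1 \<or> \<sigma> = -1" by (rule sg)
    fix t assume "t \<in> {0..a}"
    then show "\<gamma> t = pt L (x0 + \<sigma> * t)" using gphi all by (metis add_diff_cancel_left' diff_add_cancel)
  qed
qed



context fixes L :: real assumes Lpos: "0 < L" begin

lemma cd_sig: "\<sigma> = 1 \<or> \<sigma> = -1 \<Longrightarrow> cd L (\<sigma> * u) = cd L u"
  using cd_minus[OF Lpos, of u] by auto

lemma pt_shift: assumes "\<sigma> = 1 \<or> \<sigma> = -1" shows "pt L (u + \<sigma> * (of_int k * L)) = pt L u"
proof -
  from assms consider "\<sigma> = 1" | "\<sigma> = -1" by blast
  then show ?thesis
  proof cases
    case 1 then show ?thesis using pt_int[OF Lpos, of u k] by simp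
  next
    case 2 then show ?thesis using pt_int[OF Lpos, of u "-k"] by simp
  qed
qed

lemma pt_shift1: assumes "\<sigma> = 1 \<or> \<sigma> = -1" shows "pt L (u + \<sigma> * L) = pt L u"
  using pt_shift[OF assms, of u 1] by simp

lemma cdist_sym: assumes "z \<in> rcircle L" "w \<in> rcircle L" shows "cdist L z w = cdist L w z"
proof -
  obtain u v where "z = pt L u" "w = pt L v" using circle_pt[OF Lpos] assms by metis
  then show ?thesis using pt_cdist[OF Lpos] cd_minus[OF Lpos, of "u - v"] by simp
qed

lemma mod_repr: "\<exists>x k. x \<in> {0..<L} \<and> u = x + of_int k * L"
proof -
  define k where "k = \<lfloor>u/L\<rfloor>"
  have "of_int k \<le> u/L" "u/L < of_int k + 1" unfolding k_def by linarith+
  then have "of_int k * L \<le> u" "u < of_int k * L + L" using Lpos by (simp_all add: field_simps)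
  then show ?thesis by (intro exI[of _ "u - of_int k * L"] exI[of _ k]) auto
qed

lemma arcset:
  assumes a: "0 < a" "a \<le> L" and s: "\<sigma> = 1 \<or> \<sigma> = -1"
  shows "rcircle L - (\<lambda>t. pt L (x0 + \<sigma> * t)) ` {0<..<a} = (\<lambda>x. pt L (x0 + \<sigma> * x)) ` {a..L}"
proof
  show "rcircle L - (\<lambda>t. pt L (x0 + \<sigma> * t)) ` {0<..<a} \<subseteq> (\<lambda>x. pt L (x0 + \<sigma> * x)) ` {a..L}"
  proof
    fix z assume z: "z \<in> rcircle L - (\<lambda>t. pt L (x0 + \<sigma> * t)) ` {0<..<a}"
    obtain w where w: "z = pt L w" using circle_pt[OF Lpos] z by blast
    obtain x k where xk: "x \<in> {0..<L}" "\<sigma> * (w - x0) = x + of_int k * L" using mod_repr by blast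
    have "x0 + \<sigma> * x + \<sigma> * (of_int k * L) = w" using xk(2) s by (auto simp: algebra_simps)
    then have zx: "z = pt L (x0 + \<sigma> * x)" using w pt_shift[OF s, of "x0 + \<sigma> * x" k] by simp
    show "z \<in> (\<lambda>x. pt L (x0 + \<sigma> * x)) ` {a..L}"
    proof (cases "x = 0")
      case True
      then have "z = pt L (x0 + \<sigma> * L)" using zx pt_shift1[OF s, of x0] by simp
      then show ?thesis using a by auto
    next
      case False
      then have "x \<notin> {0<..<a}" using z zx by auto
      then have "a \<le> x" using False xk by auto
      then show ?thesis using zx xk by auto
    qed
  qed
  show "(\<lambda>x. pt L (x0 + \<sigma> * x)) ` {a..L} \<subseteq> rcircle L - (\<lambda>t. pt L (x0 + \<sigma> * t)) ` {0<..<a}"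
  proof
    fix z assume "z \<in> (\<lambda>x. pt L (x0 + \<sigma> * x)) ` {a..L}"
    then obtain x where x: "x \<in> {a..L}" "z = pt L (x0 + \<sigma> * x)" by auto
    have "z \<notin> (\<lambda>t. pt L (x0 + \<sigma> * t)) ` {0<..<a}"
    proof
      assume "z \<in> (\<lambda>t. pt L (x0 + \<sigma> * t)) ` {0<..<a}"
      then obtain t where t: "t \<in> {0<..<a}" "pt L (x0 + \<sigma> * x) = pt L (x0 + \<sigma> * t)" using x by auto
      have "cd L (\<sigma> * (x - t)) = 0" using pt_eq_cd[OF Lpos t(2)] by (simp add: algebra_simps)
      then have "cd L (x - t) = 0" using cd_sig[OF s] by simp
      moreover have "cd L (x - t) = min (x - t) (L - (x - t))" using x t by (intro cd_formula[OF Lpos]) auto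
      ultimately show False using x t by (auto simp: min_def split: if_splits)
    qed
    then show "z \<in> rcircle L - (\<lambda>t. pt L (x0 + \<sigma> * t)) ` {0<..<a}" using x pt_in[OF Lpos] by auto
  qed
qed

lemma arc_usp:
  assumes l: "0 \<le> l" "l \<le> L/2" and aa: "a = L - l" and s: "\<sigma> = 1 \<or> \<sigma> = -1"
    and usp: "unit_speed_path L {0..l} \<alpha>"
    and img: "\<alpha> ` {0..l} = (\<lambda>x. pt L (x0 + \<sigma> * x)) ` {a..L}"
  shows "(\<forall>t\<in>{0..l}. \<alpha> t = pt L (x0 + \<sigma> * (a + t))) \<or> (\<forall>t\<in>{0..l}. \<alpha> t = pt L (x0 + \<sigma> * (L - t)))"
proof -
  have lip: "cdist L (\<alpha> t) (\<alpha> t') \<le> \<bar>t - t'\<bar>" if "t \<in> {0..l}" "t' \<in> {0..l}" for t t'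
  proof (cases "t \<le> t'")
    case True then show ?thesis using usp_lip[OF usp that] by simp
  next
    case False
    have "cdist L (\<alpha> t') (\<alpha> t) \<le> t - t'" using usp_lip[OF usp that(2,1)] False by simp
    moreover have "\<alpha> t \<in> rcircle L" "\<alpha> t' \<in> rcircle L" using usp that unfolding unit_speed_path_def by auto
    ultimately show ?thesis using cdist_sym False by simp
  qed
  have da: "cdist L (pt L (x0 + \<sigma> * x)) (pt L (x0 + \<sigma> * a)) = x - a" if "x \<in> {a..L}" for x
  proof -
    have "cdist L (pt L (x0 + \<sigma> * x)) (pt L (x0 + \<sigma> * a)) = cd L (\<sigma> * (x - a))"
      by (simp add: pt_cdist[OF Lpos] algebra_simps)
    also have "\<dots> = cd L (x - a)" by (rule cd_sig[OF s])
    also have "\<dots> = x - a" using that l aa by (subst cd_eq[OF Lpos]) auto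
    finally show ?thesis .
  qed
  have dL: "cdist L (pt L (x0 + \<sigma> * x)) (pt L (x0 + \<sigma> * L)) = L - x" if "x \<in> {a..L}" for x
  proof -
    have "cdist L (pt L (x0 + \<sigma> * x)) (pt L (x0 + \<sigma> * L)) = cd L (\<sigma> * (x - L))"
      by (simp add: pt_cdist[OF Lpos] algebra_simps)
    also have "\<dots> = cd L (x - L)" by (rule cd_sig[OF s])
    also have "\<dots> = L - x" using that l aa by (subst cd_eq[OF Lpos]) auto
    finally show ?thesis .
  qed
  have "pt L (x0 + \<sigma> * a) \<in> \<alpha> ` {0..l}" using img aa l by auto
  then obtain tp where tp: "tp \<in> {0..l}" "\<alpha> tp = pt L (x0 + \<sigma> * a)" by auto
  have "pt L (x0 + \<sigma> * L) \<in> \<alpha> ` {0..l}" using img aa l by auto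
  then obtain tq where tq: "tq \<in> {0..l}" "\<alpha> tq = pt L (x0 + \<sigma> * L)" by auto
  have "l = cdist L (pt L (x0 + \<sigma> * L)) (pt L (x0 + \<sigma> * a))" using da[of L] aa l by simp
  also have "\<dots> \<le> \<bar>tq - tp\<bar>" using lip[OF tq(1) tp(1)] tp tq by simp
  finally have ends: "(tp = 0 \<and> tq = l) \<or> (tp = l \<and> tq = 0)" using tp tq by auto
  have key: "x - a \<le> \<bar>t - tp\<bar> \<and> L - x \<le> \<bar>t - tq\<bar>" if "t \<in> {0..l}" "x \<in> {a..L}" "\<alpha> t = pt L (x0 + \<sigma> * x)" for t x
    using lip[OF that(1) tp(1)] lip[OF that(1) tq(1)] da[OF that(2)] dL[OF that(2)] that(3) tp tq by simp
  from ends show ?thesis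
  proof
    assume e: "tp = 0 \<and> tq = l"
    have "\<alpha> t = pt L (x0 + \<sigma> * (a + t))" if "t \<in> {0..l}" for t
    proof -
      have "\<alpha> t \<in> (\<lambda>x. pt L (x0 + \<sigma> * x)) ` {a..L}" using img that by blast
      then obtain x where x: "x \<in> {a..L}" "\<alpha> t = pt L (x0 + \<sigma> * x)" by blast
      have "x = a + t" using key[OF that x] e that aa by auto
      then show ?thesis using x by simp
    qed
    then show ?thesis by blast
  next
    assume e: "tp = l \<and> tq = 0"
    have "\<alpha> t = pt L (x0 + \<sigma> * (L - t))" if "t \<in> {0..l}" for t
    proof -
      have "\<alpha> t \<in> (\<lambda>x. pt L (x0 + \<sigma> * x)) ` {a..L}" using img that by blast
      then obtain x where x: "x \<in> {a..L}" "\<alpha> t = pt L (x0 + \<sigma> * x)" by blast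
      have "x = L - t" using key[OF that x] e that aa by auto
      then show ?thesis using x by simp
    qed
    then show ?thesis by blast
  qed
qed

end


definition good :: "real \<Rightarrow> real \<Rightarrow> (real \<Rightarrow> real) \<Rightarrow> bool" where
  "good L L' G \<longleftrightarrow> (\<forall>x y. x \<le> y \<longrightarrow> G x \<le> G y \<and> G y - G x \<le> y - x) \<and> (\<forall>x. G (x + L) = G x + L')"

definition pext :: "real \<Rightarrow> real \<Rightarrow> (real \<Rightarrow> real) \<Rightarrow> real \<Rightarrow> real" where
  "pext L L' g x = of_int \<lfloor>x/L\<rfloor> * L' + g (x - of_int \<lfloor>x/L\<rfloor> * L)"

lemma good_minus: "good L L' G \<Longrightarrow> G (x - L) = G x - L'"
  unfolding good_def by (metis diff_add_cancel eq_diff_eq)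

lemma good_comp: assumes F: "good L1 L2 F" and G: "good L2 L3 G" shows "good L1 L3 (G \<circ> F)"
proof -
  have "G (F x) \<le> G (F y) \<and> G (F y) - G (F x) \<le> y - x" if "x \<le> y" for x y
  proof -
    have "F x \<le> F y" "F y - F x \<le> y - x" using F that unfolding good_def by auto
    moreover have "G (F x) \<le> G (F y) \<and> G (F y) - G (F x) \<le> F y - F x" using G \<open>F x \<le> F y\<close> unfolding good_def by auto
    ultimately show ?thesis by linarith
  qed
  moreover have "G (F (x + L1)) = G (F x) + L3" for x using F G unfolding good_def by auto
  ultimately show ?thesis unfolding good_def by auto
qed

lemma good_id: "good L L id" unfolding good_def by auto

lemma floor_bounds:
  assumes "0 < L" shows "0 \<le> x - of_int \<lfloor>x/L\<rfloor> * L \<and> x - of_int \<lfloor>x/L\<rfloor> * L < L"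
proof -
  define k where "k = \<lfloor>x/L\<rfloor>"
  have "of_int k \<le> x/L" "x/L < of_int k + 1" unfolding k_def by linarith+
  then have "of_int k * L \<le> x" "x < of_int k * L + L" using assms by (simp_all add: field_simps)
  then show ?thesis unfolding k_def[symmetric] by simp
qed

lemma pext_good:
  assumes L: "0 < L"
    and g: "\<And>x y. 0 \<le> x \<Longrightarrow> x \<le> y \<Longrightarrow> y \<le> L \<Longrightarrow> g x \<le> g y \<and> g y - g x \<le> y - x"
    and g0: "g 0 = 0" and gL: "g L = L'"
  shows "good L L' (pext L L' g)"
proof -
  have L': "0 \<le> L'" "L' \<le> L" using g[of 0 L] g0 gL L by auto
  have mono: "pext L L' g x \<le> pext L L' g y \<and> pext L L' g y - pext L L' g x \<le> y - x" if xy: "x \<le> y" for x y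
  proof -
    define kx where "kx = \<lfloor>x/L\<rfloor>"
    define ky where "ky = \<lfloor>y/L\<rfloor>"
    define x' where "x' = x - of_int kx * L"
    define y' where "y' = y - of_int ky * L"
    have bx: "0 \<le> x'" "x' < L" using floor_bounds[OF L, of x] unfolding x'_def kx_def by auto
    have by': "0 \<le> y'" "y' < L" using floor_bounds[OF L, of y] unfolding y'_def ky_def by auto
    have px: "pext L L' g x = of_int kx * L' + g x'" unfolding pext_def kx_def x'_def by simp
    have py: "pext L L' g y = of_int ky * L' + g y'" unfolding pext_def ky_def y'_def by simp
    have "x/L \<le> y/L" using xy L by (simp add: divide_right_mono)
    then have k: "kx \<le> ky" unfolding kx_def ky_def by (rule floor_mono)
    show ?thesis
    proof (cases "kx = ky")
      case True
      then have "x' \<le> y'" unfolding x'_def y'_def using xy by simp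
      then have "g x' \<le> g y' \<and> g y' - g x' \<le> y' - x'" using g bx by' by auto
      then show ?thesis using px py True unfolding x'_def y'_def by auto
    next
      case False
      then have k1: "1 \<le> of_int ky - (of_int kx :: real)" using k by linarith
      have a1: "g x' \<le> L'" "L' - g x' \<le> L - x'" using g[of x' L] bx gL by auto
      have a2: "0 \<le> g y'" "g y' \<le> y'" using g[of 0 y'] by' g0 by auto
      have m1: "(of_int ky - of_int kx - 1) * L' \<le> (of_int ky - of_int kx - 1) * L"
        using k1 L' by (intro mult_left_mono) auto
      have m2: "0 \<le> (of_int ky - of_int kx - 1) * L'" using k1 L' by simp
      have m1': "of_int ky * L' - of_int kx * L' - L' \<le> of_int ky * L - of_int kx * L - L"
        using m1 by (simp add: algebra_simps)
      have m2': "0 \<le> of_int ky * L' - of_int kx * L' - L'" using m2 by (simp add: algebra_simps)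
      show ?thesis using px py a1 a2 m1' m2' unfolding x'_def y'_def by linarith
    qed
  qed
  have per: "pext L L' g (x + L) = pext L L' g x + L'" for x
  proof -
    have "(x + L)/L = x/L + 1" using L by (simp add: field_simps)
    then have "\<lfloor>(x + L)/L\<rfloor> = \<lfloor>x/L\<rfloor> + 1" by simp
    then show ?thesis unfolding pext_def by (simp add: algebra_simps)
  qed
  show ?thesis unfolding good_def using mono per by blast
qed

lemma pext_decomp:
  assumes L: "0 < L"
  shows "\<exists>k y. y \<in> {0..<L} \<and> x = y + of_int k * L \<and> pext L L' g x = g y + of_int k * L'"
  using floor_bounds[OF L, of x] unfolding pext_def
  by (intro exI[of _ "\<lfloor>x/L\<rfloor>"] exI[of _ "x - of_int \<lfloor>x/L\<rfloor> * L"]) auto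

lemma step_general:
  assumes L: "0 < L" and L': "0 < L'" and G0: "good L L' G0"
    and s1: "s1 = 1 \<or> s1 = -1" and s2: "s2 = 1 \<or> s2 = -1"
    and eq: "\<And>x. pr (pt L (xi + s1 * x)) = pt L' (xp + s2 * G0 x)"
    and s: "\<sigma> = 1 \<or> \<sigma> = -1"
  shows "\<exists>\<sigma>' G. (\<sigma>' = 1 \<or> \<sigma>' = -1) \<and> good L L' G \<and> (\<forall>y. pr (pt L (\<sigma> * y)) = pt L' (\<sigma>' * G y))"
proof -
  define \<tau> where "\<tau> = s1 * \<sigma>"
  have t: "\<tau> = 1 \<or> \<tau> = -1" unfolding \<tau>_def using s1 s by auto
  have tt: "\<tau> * \<tau> = 1" "s1 * s1 = 1" "s2 * s2 = 1" using t s1 s2 by auto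
  define G where "G y = \<tau> * s2 * xp + \<tau> * G0 (\<tau> * y - s1 * xi)" for y
  have eqG: "pr (pt L (\<sigma> * y)) = pt L' ((s2 * \<tau>) * G y)" for y
  proof -
    have "\<sigma> * y = xi + s1 * (\<tau> * y - s1 * xi)"
      unfolding \<tau>_def using s1 by (auto simp: algebra_simps)
    then have "pr (pt L (\<sigma> * y)) = pt L' (xp + s2 * G0 (\<tau> * y - s1 * xi))" using eq by metis
    also have "xp + s2 * G0 (\<tau> * y - s1 * xi) = (s2 * \<tau>) * G y"
      unfolding G_def using tt by (simp add: algebra_simps) (metis mult.assoc mult_1 tt(1) tt(3) mult.left_commute)
    finally show ?thesis .
  qed
  have gG: "good L L' G"
  proof -
    from t consider "\<tau> = 1" | "\<tau> = -1" by blast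
    then show ?thesis
    proof cases
      case 1
      have m: "G x \<le> G y \<and> G y - G x \<le> y - x" if "x \<le> y" for x y
      proof -
        have "G0 (x - s1 * xi) \<le> G0 (y - s1 * xi) \<and> G0 (y - s1 * xi) - G0 (x - s1 * xi) \<le> (y - s1 * xi) - (x - s1 * xi)"
          using G0 that unfolding good_def by (meson diff_right_mono)
        then show ?thesis unfolding G_def 1 by auto
      qed
      have p: "G (x + L) = G x + L'" for x
      proof -
        have "G0 ((x + L) - s1 * xi) = G0 (x - s1 * xi) + L'"
          using G0 unfolding good_def by (metis add_diff_eq diff_add_eq)
        then show ?thesis unfolding G_def 1 by simp
      qed
      show ?thesis unfolding good_def using m p by blast
    next
      case 2
      have m: "G x \<le> G y \<and> G y - G x \<le> y - x" if "x \<le> y" for x y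
      proof -
        have "G0 (-y - s1 * xi) \<le> G0 (-x - s1 * xi) \<and> G0 (-x - s1 * xi) - G0 (-y - s1 * xi) \<le> (-x - s1 * xi) - (-y - s1 * xi)"
          using G0 that unfolding good_def by (meson diff_right_mono neg_le_iff_le)
        then show ?thesis unfolding G_def 2 by auto
      qed
      have p: "G (x + L) = G x + L'" for x
      proof -
        have e: "- (x + L) - s1 * xi = (- x - s1 * xi) - L" by simp
        have "G0 (- (x + L) - s1 * xi) = G0 (- x - s1 * xi) - L'"
          unfolding e by (rule good_minus[OF G0])
        then show ?thesis unfolding G_def 2 by simp
      qed
      show ?thesis unfolding good_def using m p by blast
    qed
  qed
  show ?thesis
    by (intro exI[of _ "s2 * \<tau>"] exI[of _ G] conjI gG allI eqG) (use t s2 in auto)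
qed



lemma core:
  fixes L L' a xi xp s1 s2 :: real and io ph \<alpha> \<beta> :: "real \<Rightarrow> complex" and pr :: "complex \<Rightarrow> complex"
  assumes L: "0 < L" and L': "0 < L'" and a: "0 < a" "a < L" "a \<le> L'" "L' < L"
    and half: "L'/2 \<le> a"
    and s1: "s1 = 1 \<or> s1 = -1" and s2: "s2 = 1 \<or> s2 = -1"
    and io: "\<forall>t\<in>{0..a}. io t = pt L (xi + s1 * t)"
    and ph: "\<forall>t\<in>{0..a}. ph t = pt L' (xp + s2 * t)"
    and ac: "(\<forall>t\<in>{0..L-a}. \<alpha> t = pt L (xi + s1 * (a + t))) \<or> (\<forall>t\<in>{0..L-a}. \<alpha> t = pt L (xi + s1 * (L - t)))"
    and bc: "(\<forall>t\<in>{0..L'-a}. \<beta> t = pt L' (xp + s2 * (a + t))) \<or> (\<forall>t\<in>{0..L'-a}. \<beta> t = pt L' (xp + s2 * (L' - t)))"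
    and prio: "\<forall>t\<in>{0..a}. pr (io t) = ph t"
    and pral: "\<forall>t\<in>{0..L-a}. pr (\<alpha> t) = \<beta> (t * (L' - a) / (L - a))"
  shows "\<forall>x\<in>{0..L}. pr (pt L (xi + s1 * x)) = pt L' (xp + s2 * min x (a + (x - a) * ((L' - a) / (L - a))))"
proof
  fix x assume x: "x \<in> {0..L}"
  define l where "l = L - a"
  define l' where "l' = L' - a"
  define \<rho> where "\<rho> = l' / l"
  have l: "0 < l" "0 \<le> l'" "l' < l" using a unfolding l_def l'_def by auto
  have rho: "0 \<le> \<rho>" "\<rho> < 1" "l * \<rho> = l'" using l unfolding \<rho>_def by (auto simp: field_simps)
  have ptL: "pt L (xi + s1 * L) = pt L xi" using pt_shift1[OF L s1] .
  have ptL': "pt L' (xp + s2 * L') = pt L' xp" using pt_shift1[OF L' s2] .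
  have pio0: "pr (pt L xi) = pt L' xp" using prio io ph a by (metis atLeastAtMost_iff add_0_right mult_zero_right order_refl less_imp_le)
  have pioa: "pr (pt L (xi + s1 * a)) = pt L' (xp + s2 * a)" using prio io ph a by (metis atLeastAtMost_iff order_refl less_imp_le)
  have mixed: "l' = 0" if "pt L' (xp + s2 * a) = pt L' xp"
  proof -
    have "cd L' (s2 * a) = 0" using pt_eq_cd[OF L' that] by simp
    then have "cd L' a = 0" using cd_sig[OF L' s2] by simp
    moreover have "cd L' a = min a (L' - a)" using a by (intro cd_formula[OF L']) auto
    ultimately show ?thesis unfolding l'_def using a half by (auto simp: min_def split: if_splits)
  qed
  have b0: "\<beta> 0 = pr (\<alpha> 0)" using pral l unfolding l_def by force
  have bl: "\<beta> l' = pr (\<alpha> l)" using pral[rule_format, of l] l unfolding l_def l'_def by force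
  show "pr (pt L (xi + s1 * x)) = pt L' (xp + s2 * min x (a + (x - a) * ((L' - a) / (L - a))))"
  proof (cases "x \<le> a")
    case True
    have "(a - x) * \<rho> \<le> (a - x) * 1" using True rho by (intro mult_left_mono) auto
    then have "min x (a + (x - a) * \<rho>) = x" by (auto simp: algebra_simps min_def)
    moreover have "pr (pt L (xi + s1 * x)) = pt L' (xp + s2 * x)" using prio io ph x True by auto
    ultimately show ?thesis unfolding \<rho>_def l_def l'_def by simp
  next
    case False
    have "(x - a) * \<rho> \<le> (x - a) * 1" using False rho by (intro mult_left_mono) auto
    then have mn: "min x (a + (x - a) * \<rho>) = a + (x - a) * \<rho>" by (auto simp: algebra_simps min_def)
    have target: "pr (pt L (xi + s1 * x)) = pt L' (xp + s2 * (a + (x - a) * \<rho>))"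
    proof -
      from ac show ?thesis
      proof
        assume A: "\<forall>t\<in>{0..L-a}. \<alpha> t = pt L (xi + s1 * (a + t))"
        define t where "t = x - a"
        have t: "t \<in> {0..l}" using False x unfolding t_def l_def by auto
        have "pt L (xi + s1 * x) = \<alpha> t" using A t unfolding t_def l_def by auto
        then have e1: "pr (pt L (xi + s1 * x)) = \<beta> (t * \<rho>)"
          using pral t unfolding l_def l'_def \<rho>_def by (auto simp: mult_divide_mult_cancel_left_if)
        have tr: "t * \<rho> \<in> {0..l'}" using t rho mult_left_mono[of \<rho> 1 t] mult_right_mono[of t l \<rho>] by auto
        from bc show ?thesis
        proof
          assume A': "\<forall>t\<in>{0..L'-a}. \<beta> t = pt L' (xp + s2 * (a + t))"
          then show ?thesis using e1 tr unfolding t_def l'_def by auto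
        next
          assume B': "\<forall>t\<in>{0..L'-a}. \<beta> t = pt L' (xp + s2 * (L' - t))"
          have "\<beta> 0 = pt L' xp" using B' l ptL' unfolding l'_def by auto
          moreover have "\<alpha> 0 = pt L (xi + s1 * a)" using A l unfolding l_def by auto
          ultimately have "l' = 0" using b0 pioa mixed by simp
          then have "\<rho> = 0" "L' = a" unfolding \<rho>_def l'_def by auto
          then show ?thesis using e1 B' ptL' by auto
        qed
      next
        assume B: "\<forall>t\<in>{0..L-a}. \<alpha> t = pt L (xi + s1 * (L - t))"
        define t where "t = L - x"
        have t: "t \<in> {0..l}" using False x unfolding t_def l_def by auto
        have "pt L (xi + s1 * x) = \<alpha> t" using B t unfolding t_def l_def by auto
        then have e1: "pr (pt L (xi + s1 * x)) = \<beta> (t * \<rho>)"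
          using pral t unfolding l_def l'_def \<rho>_def by (auto simp: mult_divide_mult_cancel_left_if)
        have tr: "t * \<rho> \<in> {0..l'}" using t rho mult_left_mono[of \<rho> 1 t] mult_right_mono[of t l \<rho>] by auto
        from bc show ?thesis
        proof
          assume A': "\<forall>t\<in>{0..L'-a}. \<beta> t = pt L' (xp + s2 * (a + t))"
          have "\<beta> 0 = pt L' (xp + s2 * a)" using A' l unfolding l'_def by auto
          moreover have "\<alpha> 0 = pt L xi" using B l ptL unfolding l_def by auto
          ultimately have "l' = 0" using b0 pio0 mixed by simp
          then have "\<rho> = 0" unfolding \<rho>_def by auto
          then show ?thesis using e1 \<open>\<beta> 0 = pt L' (xp + s2 * a)\<close> by auto
        next
          assume B': "\<forall>t\<in>{0..L'-a}. \<beta> t = pt L' (xp + s2 * (L' - t))"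
          have "L' - t * \<rho> = a + (x - a) * \<rho>" using rho(3) unfolding t_def l_def l'_def by (simp add: algebra_simps)
          then show ?thesis using e1 B' tr unfolding l'_def by auto
        qed
      qed
    qed
    show ?thesis using target mn unfolding \<rho>_def l_def l'_def by simp
  qed
qed



lemma min_lip:
  fixes x y u v :: real
  assumes "x \<le> y" "u \<le> v" "v - u \<le> y - x"
  shows "min x u \<le> min y v \<and> min y v - min x u \<le> y - x"
  using assms by (auto simp: min_def)

lemma Lfacts:
  assumes ts: "tightening_seq L tight a io ph pr"
  shows "\<forall>i. L (Suc i) \<le> L i" "\<forall>i. L i \<le> L 0" "\<forall>i. L 0 / 2 \<le> L i" "\<forall>i. 0 < L i"
proof -
  have st: "tightening_step L tight a io ph pr i" for i using ts unfolding tightening_seq_def by auto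
  have pos: "0 < L i" for i using ts unfolding tightening_seq_def by auto
  have dec: "L (Suc i) \<le> L i" for i using st[of i] unfolding tightening_step_def by (auto split: if_splits)
  have low: "L 0 / 2 \<le> L (Suc i) \<or> L (Suc i) = L i" for i
  proof (cases "tight i")
    case True
    then have "L 0 / 2 \<le> a i" "0 \<le> Qbarlen L tight a i" using st[of i] unfolding tightening_step_def by auto
    then show ?thesis using True unfolding Qbarlen_def by auto
  next
    case False then show ?thesis using st[of i] unfolding tightening_step_def by auto
  qed
  show "\<forall>i. L (Suc i) \<le> L i" using dec by blast
  show "\<forall>i. L i \<le> L 0"
  proof
    fix i show "L i \<le> L 0" by (induction i) (auto intro: order_trans[OF dec])
  qed
  show "\<forall>i. L 0 / 2 \<le> L i"
  proof
    fix i show "L 0 / 2 \<le> L i"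
    proof (induction i)
      case 0 then show ?case using pos[of 0] by simp
    next
      case (Suc i) then show ?case using low[of i] by auto
    qed
  qed
  show "\<forall>i. 0 < L i" using pos by blast
qed

lemma tstep:
  assumes ts: "tightening_seq L tight a io ph pr" and s: "\<sigma> = 1 \<or> \<sigma> = -1"
  shows "\<exists>\<sigma>' G. (\<sigma>' = 1 \<or> \<sigma>' = -1) \<and> good (L i) (L (Suc i)) G \<and>
           (\<forall>y. pr i (pt (L i) (\<sigma> * y)) = pt (L (Suc i)) (\<sigma>' * G y))"
proof -
  note LF = Lfacts[OF ts]
  have st: "tightening_step L tight a io ph pr i" using ts unfolding tightening_seq_def by auto
  have Li: "0 < L i" and Lj: "0 < L (Suc i)" using LF by auto
  show ?thesis
  proof (cases "tight i")
    case False
    then have "L (Suc i) = L i" "\<forall>z\<in>rcircle (L i). pr i z = z" using st unfolding tightening_step_def by auto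
    then show ?thesis using good_id pt_in[OF Li] s by (intro exI[of _ \<sigma>] exI[of _ id]) auto
  next
    case True
    define Lx where "Lx = L i"
    define Ly where "Ly = L (Suc i)"
    define A where "A = a i"
    have Lx: "0 < Lx" and Ly: "0 < Ly" unfolding Lx_def Ly_def using Li Lj by auto
    from st True obtain \<alpha> \<beta> where
      A0: "0 < A" and Ahalf: "L 0 / 2 \<le> A"
      and usp_io: "unit_speed_path Lx {0..A} (io i)" and inj_io: "inj_on (io i) {0..A}"
      and usp_ph: "unit_speed_path Ly {0..A} (ph i)" and inj_ph: "inj_on (ph i) {0<..<A}"
      and LyLx: "Ly < Lx"
      and usp_al: "unit_speed_path Lx {0..Lx - A} \<alpha>"
      and img_al: "\<alpha> ` {0..Lx - A} = rcircle Lx - io i ` {0<..<A}"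
      and usp_be: "unit_speed_path Ly {0..Ly - A} \<beta>"
      and img_be: "\<beta> ` {0..Ly - A} = rcircle Ly - ph i ` {0<..<A}"
      and q1: "0 \<le> Ly - A" and q2: "Ly - A < Lx - A"
      and prio: "\<forall>t\<in>{0..A}. pr i (io i t) = ph i t"
      and pral: "\<forall>t\<in>{0..Lx - A}. pr i (\<alpha> t) = \<beta> (t * (Ly - A) / (Lx - A))"
      unfolding tightening_step_def Qlen_def Qbarlen_def Qset_def Qbarset_def Lx_def Ly_def A_def
      by auto
    have inj': "inj_on (io i) {0<..<A}" using inj_io by (rule inj_on_subset) auto
    have LxL0: "Lx \<le> L 0" using LF unfolding Lx_def by auto
    obtain xi s1 where s1: "s1 = 1 \<or> s1 = -1" and io: "\<forall>t\<in>{0..A}. io i t = pt Lx (xi + s1 * t)"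
      using lift_usp[OF Lx A0 usp_io inj'] by auto
    obtain xp s2 where s2: "s2 = 1 \<or> s2 = -1" and ph: "\<forall>t\<in>{0..A}. ph i t = pt Ly (xp + s2 * t)"
      using lift_usp[OF Ly A0 usp_ph inj_ph] by auto
    have AL: "A \<le> Lx" "A \<le> Ly" using q1 q2 by linarith+
    have e1: "io i ` {0<..<A} = (\<lambda>t. pt Lx (xi + s1 * t)) ` {0<..<A}" using io by (intro image_cong) auto
    have img_al': "\<alpha> ` {0..Lx - A} = (\<lambda>x. pt Lx (xi + s1 * x)) ` {A..Lx}"
      using img_al unfolding e1 arcset[OF Lx A0 AL(1) s1] .
    have e2: "ph i ` {0<..<A} = (\<lambda>t. pt Ly (xp + s2 * t)) ` {0<..<A}" using ph by (intro image_cong) auto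
    have img_be': "\<beta> ` {0..Ly - A} = (\<lambda>x. pt Ly (xp + s2 * x)) ` {A..Ly}"
      using img_be unfolding e2 arcset[OF Ly A0 AL(2) s2] .
    have ac: "(\<forall>t\<in>{0..Lx - A}. \<alpha> t = pt Lx (xi + s1 * (A + t))) \<or> (\<forall>t\<in>{0..Lx - A}. \<alpha> t = pt Lx (xi + s1 * (Lx - t)))"
      using arc_usp[OF Lx _ _ _ s1 usp_al img_al'] q2 Ahalf LxL0 by auto
    have bc: "(\<forall>t\<in>{0..Ly - A}. \<beta> t = pt Ly (xp + s2 * (A + t))) \<or> (\<forall>t\<in>{0..Ly - A}. \<beta> t = pt Ly (xp + s2 * (Ly - t)))"
      using arc_usp[OF Ly _ _ _ s2 usp_be img_be'] q1 Ahalf LxL0 LyLx by auto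
    define g where "g x = min x (A + (x - A) * ((Ly - A) / (Lx - A)))" for x
    have cor: "\<forall>x\<in>{0..Lx}. pr i (pt Lx (xi + s1 * x)) = pt Ly (xp + s2 * g x)"
      unfolding g_def
      by (rule core[OF Lx Ly A0 _ _ LyLx _ s1 s2 io ph ac bc prio pral]) (use q1 q2 Ahalf LxL0 LyLx in auto)
    define \<rho> where "\<rho> = (Ly - A) / (Lx - A)"
    have rho: "0 \<le> \<rho>" "\<rho> \<le> 1" "(Lx - A) * \<rho> = Ly - A" using q1 q2 unfolding \<rho>_def by (auto simp: field_simps)
    have gmono: "g x \<le> g y \<and> g y - g x \<le> y - x" if "0 \<le> x" "x \<le> y" "y \<le> Lx" for x y
    proof -
      have "(x - A) * \<rho> \<le> (y - A) * \<rho>" using that rho by (intro mult_right_mono) auto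
      moreover have "(y - A) * \<rho> - (x - A) * \<rho> \<le> y - x"
      proof -
        have "(y - x) * \<rho> \<le> (y - x) * 1" using that rho by (intro mult_left_mono) auto
        then show ?thesis by (simp add: algebra_simps)
      qed
      ultimately show ?thesis unfolding g_def \<rho>_def[symmetric] by (intro min_lip) (use that in auto)
    qed
    have g0: "g 0 = 0"
    proof -
      have "A * \<rho> \<le> A * 1" using rho A0 by (intro mult_left_mono) auto
      then show ?thesis unfolding g_def \<rho>_def[symmetric] by (auto simp: min_def algebra_simps)
    qed
    have gL: "g Lx = Ly" using rho q1 LyLx unfolding g_def \<rho>_def[symmetric] by (auto simp: min_def algebra_simps)
    have G0: "good Lx Ly (pext Lx Ly g)" by (rule pext_good[OF Lx gmono g0 gL])
    have eq: "pr i (pt Lx (xi + s1 * x)) = pt Ly (xp + s2 * pext Lx Ly g x)" for x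
    proof -
      obtain k y where ky: "y \<in> {0..<Lx}" "x = y + of_int k * Lx" "pext Lx Ly g x = g y + of_int k * Ly"
        using pext_decomp[OF Lx] by blast
      have "pt Lx (xi + s1 * x) = pt Lx ((xi + s1 * y) + s1 * (of_int k * Lx))" using ky by (simp add: algebra_simps)
      also have "\<dots> = pt Lx (xi + s1 * y)" by (rule pt_shift[OF Lx s1])
      finally have "pr i (pt Lx (xi + s1 * x)) = pt Ly (xp + s2 * g y)" using cor ky by auto
      also have "\<dots> = pt Ly ((xp + s2 * g y) + s2 * (of_int k * Ly))" by (rule pt_shift[OF Ly s2, symmetric])
      also have "\<dots> = pt Ly (xp + s2 * pext Lx Ly g x)" using ky by (simp add: algebra_simps)
      finally show ?thesis .
    qed
    show ?thesis using step_general[OF Lx Ly G0 s1 s2 eq s] unfolding Lx_def Ly_def by blast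
  qed
qed



primrec sigs :: "(nat \<Rightarrow> real \<Rightarrow> real) \<Rightarrow> nat \<Rightarrow> real" where
  "sigs SS 0 = 1"
| "sigs SS (Suc i) = SS i (sigs SS i)"

primrec Fs :: "(nat \<Rightarrow> real \<Rightarrow> real) \<Rightarrow> (nat \<Rightarrow> real \<Rightarrow> real \<Rightarrow> real) \<Rightarrow> nat \<Rightarrow> real \<Rightarrow> real" where
  "Fs SS GG 0 = id"
| "Fs SS GG (Suc i) = GG i (sigs SS i) \<circ> Fs SS GG i"

theorem lemma4p1:
  fixes L a :: "nat \<Rightarrow> real" and tight :: "nat \<Rightarrow> bool"
    and io ph :: "nat \<Rightarrow> real \<Rightarrow> complex" and pr :: "nat \<Rightarrow> complex \<Rightarrow> complex"
  assumes "tightening_seq L tight a io ph pr"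
    and "completely_disjoint L tight a io pr"
    and "summable (Qlen L tight a)"
    and "suminf (Qlen L tight a) < L 0"
  shows "(\<forall>x\<in>rcircle (L 0). \<forall>y\<in>rcircle (L 0).
            convergent (\<lambda>i. cdist (L i) (pic pr i x) (pic pr i y)))
    \<and> pseudometric_on (rcircle (L 0)) (delta L pr)
    \<and> (\<exists>Linf. L \<longlonglongrightarrow> Linf \<and> 0 < Linf \<and>
         (\<exists>q. q ` rcircle (L 0) = rcircle Linf \<and>
              (\<forall>x\<in>rcircle (L 0). \<forall>y\<in>rcircle (L 0). cdist Linf (q x) (q y) = delta L pr x y)))"
proof -
  note ts = assms(1)
  note LF = Lfacts[OF ts]
  have Lpos: "0 < L i" for i using LF by auto
  have L0: "0 < L 0" by (rule Lpos)
  define P where "P i \<sigma> \<sigma>' G \<longleftrightarrow> (\<sigma>' = 1 \<or> \<sigma>' = -1) \<and> good (L i) (L (Suc i)) G \<and>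
           (\<forall>y. pr i (pt (L i) (\<sigma> * y)) = pt (L (Suc i)) (\<sigma>' * G y))" for i \<sigma> \<sigma>' G
  have ex: "\<exists>\<sigma>' G. P i \<sigma> \<sigma>' G" if "\<sigma> = 1 \<or> \<sigma> = -1" for i \<sigma>
    unfolding P_def by (rule tstep[OF ts that])
  define SS where "SS i \<sigma> = (SOME \<sigma>'. \<exists>G. P i \<sigma> \<sigma>' G)" for i \<sigma>
  define GG where "GG i \<sigma> = (SOME G. P i \<sigma> (SS i \<sigma>) G)" for i \<sigma>
  have PSG: "P i \<sigma> (SS i \<sigma>) (GG i \<sigma>)" if "\<sigma> = 1 \<or> \<sigma> = -1" for i \<sigma>
  proof -
    have "\<exists>G. P i \<sigma> (SS i \<sigma>) G" unfolding SS_def by (rule someI_ex) (rule ex[OF that])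
    then show ?thesis unfolding GG_def by (rule someI_ex)
  qed
  have SG: "\<And>i \<sigma>. \<sigma> = 1 \<or> \<sigma> = -1 \<Longrightarrow> (SS i \<sigma> = 1 \<or> SS i \<sigma> = -1) \<and> good (L i) (L (Suc i)) (GG i \<sigma>) \<and>
           (\<forall>y. pr i (pt (L i) (\<sigma> * y)) = pt (L (Suc i)) (SS i \<sigma> * GG i \<sigma> y))"
    using PSG unfolding P_def by blast
  define sg where "sg = sigs SS"
  define F where "F = Fs SS GG"
  have inv: "(sg i = 1 \<or> sg i = -1) \<and> good (L 0) (L i) (F i) \<and> (\<forall>x. pic pr i (pt (L 0) x) = pt (L i) (sg i * F i x))" for i
  proof (induction i)
    case 0 then show ?case unfolding sg_def F_def by (simp add: good_def)
  next
    case (Suc i)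
    have s: "sg i = 1 \<or> sg i = -1" using Suc by blast
    note SGi = SG[OF s]
    have e1: "sg (Suc i) = SS i (sg i)" and e2: "F (Suc i) = GG i (sg i) \<circ> F i" unfolding sg_def F_def by simp_all
    have A: "sg (Suc i) = 1 \<or> sg (Suc i) = -1" using SGi e1 by simp
    have B: "good (L 0) (L (Suc i)) (F (Suc i))" unfolding e2 using good_comp Suc SGi by blast
    have C: "pic pr (Suc i) (pt (L 0) x) = pt (L (Suc i)) (sg (Suc i) * F (Suc i) x)" for x
      using Suc SGi e1 e2 by simp
    show ?case using A B C by blast
  qed
  have sgi: "sg i = 1 \<or> sg i = -1" for i using inv by blast
  have Fg: "good (L 0) (L i) (F i)" for i using inv by blast
  have picF: "pic pr i (pt (L 0) x) = pt (L i) (sg i * F i x)" for i x using inv by blast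
  have Fmono: "F i x \<le> F i y \<and> F i y - F i x \<le> y - x" if "x \<le> y" for i x y
    using Fg[of i] that unfolding good_def by blast
  have Fper: "F i (x + L 0) = F i x + L i" for i x using Fg[of i] unfolding good_def by blast
  have Fdec: "F (Suc i) y - F (Suc i) x \<le> F i y - F i x" if "x \<le> y" for i x y
  proof -
    have "F (Suc i) = GG i (sg i) \<circ> F i" unfolding F_def sg_def by simp
    moreover have "good (L i) (L (Suc i)) (GG i (sg i))" using SG[OF sgi[of i]] by blast
    ultimately show ?thesis using Fmono[OF that, of i] unfolding good_def by auto
  qed
  have "decseq L" using LF(1) by (simp add: decseq_Suc_iff)
  then obtain Linf where Llim: "L \<longlonglongrightarrow> Linf" using decseq_convergent[of L 0] Lpos less_imp_le by metis
  have Linf: "L 0 / 2 \<le> Linf" using LIMSEQ_le_const[OF Llim] LF(3) by blast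
  then have Linfpos: "0 < Linf" using L0 by simp
  define Phi where "Phi x = lim (\<lambda>i. F i x - F i 0)" for x
  have Philim: "(\<lambda>i. F i x - F i 0) \<longlonglongrightarrow> Phi x" if "0 \<le> x" for x
  proof -
    have "decseq (\<lambda>i. F i x - F i 0)" using Fdec[OF that] by (simp add: decseq_Suc_iff)
    moreover have "\<forall>i. 0 \<le> F i x - F i 0" using Fmono[OF that] by auto
    ultimately obtain l where "(\<lambda>i. F i x - F i 0) \<longlonglongrightarrow> l" by (rule decseq_convergent)
    then show ?thesis unfolding Phi_def by (simp add: limI)
  qed
  have Dlim: "(\<lambda>i. F i y - F i x) \<longlonglongrightarrow> Phi y - Phi x" if "0 \<le> x" "0 \<le> y" for x y
    using tendsto_diff[OF Philim[OF that(2)] Philim[OF that(1)]] by simp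
  have Phimono: "0 \<le> Phi y - Phi x \<and> Phi y - Phi x \<le> y - x" if "0 \<le> x" "x \<le> y" for x y
  proof -
    have *: "\<forall>i. 0 \<le> F i y - F i x \<and> F i y - F i x \<le> y - x" using Fmono[OF that(2)] by auto
    have l1: "0 \<le> Phi y - Phi x" by (rule LIMSEQ_le_const[OF Dlim]) (use that * in auto)
    have l2: "Phi y - Phi x \<le> y - x" by (rule LIMSEQ_le_const2[OF Dlim]) (use that * in auto)
    show ?thesis using l1 l2 by simp
  qed
  have Phi0: "Phi 0 = 0" using Philim[of 0] by (simp add: LIMSEQ_const_iff)
  have PhiL: "Phi (L 0) = Linf"
  proof -
    have "(\<lambda>i. F i (L 0) - F i 0) = L" using Fper[of _ 0] by (simp add: fun_eq_iff)
    then have "L \<longlonglongrightarrow> Phi (L 0)" using Philim[of "L 0"] L0 by simp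
    then show ?thesis using Llim by (rule LIMSEQ_unique)
  qed
  have key0: "(\<lambda>i. cd (L i) (F i x - F i y)) \<longlonglongrightarrow> cd Linf (Phi x - Phi y)"
    if xy: "0 \<le> x" "x \<le> y" "y < L 0" for x y
  proof -
    have b: "0 \<le> F i y - F i x \<and> F i y - F i x \<le> L i" for i
    proof -
      have "F i y \<le> F i (x + L 0)" using Fmono[of y "x + L 0" i] xy by auto
      then show ?thesis using Fper[of i x] Fmono[OF xy(2), of i] by auto
    qed
    have e: "cd (L i) (F i x - F i y) = min (F i y - F i x) (L i - (F i y - F i x))" for i
      using cd_minus[OF Lpos[of i], of "F i y - F i x"] cd_formula[OF Lpos[of i], of "F i y - F i x"] b[of i] by simp
    have D: "0 \<le> Phi y - Phi x" "Phi y - Phi x \<le> Linf"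
      using Phimono[OF xy(1,2)] LIMSEQ_le[OF Dlim[of x y] Llim] b xy by auto
    have e2: "cd Linf (Phi x - Phi y) = min (Phi y - Phi x) (Linf - (Phi y - Phi x))"
      using cd_minus[OF Linfpos, of "Phi y - Phi x"] cd_formula[OF Linfpos, of "Phi y - Phi x"] D by simp
    show ?thesis unfolding e e2 using xy
      by (intro tendsto_min tendsto_diff Llim Dlim) auto
  qed
  have key: "(\<lambda>i. cd (L i) (F i x - F i y)) \<longlonglongrightarrow> cd Linf (Phi x - Phi y)"
    if xy: "x \<in> {0..<L 0}" "y \<in> {0..<L 0}" for x y
  proof (cases "x \<le> y")
    case True then show ?thesis using key0 xy by auto
  next
    case False
    then have "(\<lambda>i. cd (L i) (F i y - F i x)) \<longlonglongrightarrow> cd Linf (Phi y - Phi x)" using key0[of y x] xy by auto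
    moreover have "cd (L i) (F i y - F i x) = cd (L i) (F i x - F i y)" for i
      using cd_minus[OF Lpos[of i], of "F i x - F i y"] by simp
    moreover have "cd Linf (Phi y - Phi x) = cd Linf (Phi x - Phi y)"
      using cd_minus[OF Linfpos, of "Phi x - Phi y"] by simp
    ultimately show ?thesis by simp
  qed
  define xc where "xc z = (SOME x. x \<in> {0..<L 0} \<and> z = pt (L 0) x)" for z
  have xc: "xc z \<in> {0..<L 0} \<and> z = pt (L 0) (xc z)" if "z \<in> rcircle (L 0)" for z
    unfolding xc_def by (rule someI_ex) (use circle_pt01[OF L0 that] in blast)
  define q where "q z = pt Linf (Phi (xc z))" for z
  have dist_i: "cdist (L i) (pic pr i z) (pic pr i w) = cd (L i) (F i (xc z) - F i (xc w))"
    if "z \<in> rcircle (L 0)" "w \<in> rcircle (L 0)" for i z w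
  proof -
    have ez: "pic pr i z = pt (L i) (sg i * F i (xc z))"
    proof -
      have "z = pt (L 0) (xc z)" using xc[OF that(1)] by blast
      then have "pic pr i z = pic pr i (pt (L 0) (xc z))" by (rule arg_cong)
      then show ?thesis by (simp only: picF)
    qed
    have ew: "pic pr i w = pt (L i) (sg i * F i (xc w))"
    proof -
      have "w = pt (L 0) (xc w)" using xc[OF that(2)] by blast
      then have "pic pr i w = pic pr i (pt (L 0) (xc w))" by (rule arg_cong)
      then show ?thesis by (simp only: picF)
    qed
    have "cdist (L i) (pic pr i z) (pic pr i w) = cdist (L i) (pt (L i) (sg i * F i (xc z))) (pt (L i) (sg i * F i (xc w)))"
      by (simp only: ez ew)
    also have "\<dots> = cd (L i) (sg i * (F i (xc z) - F i (xc w)))" by (simp add: pt_cdist[OF Lpos] algebra_simps)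
    also have "\<dots> = cd (L i) (F i (xc z) - F i (xc w))" by (rule cd_sig[OF Lpos sgi])
    finally show ?thesis .
  qed
  have conv: "(\<lambda>i. cdist (L i) (pic pr i z) (pic pr i w)) \<longlonglongrightarrow> cdist Linf (q z) (q w)"
    if "z \<in> rcircle (L 0)" "w \<in> rcircle (L 0)" for z w
    unfolding dist_i[OF that] q_def pt_cdist[OF Linfpos] using key xc that by blast
  have deltaq: "delta L pr z w = cdist Linf (q z) (q w)" if "z \<in> rcircle (L 0)" "w \<in> rcircle (L 0)" for z w
    unfolding delta_def using conv[OF that] by (rule limI)
  have qin: "q z \<in> rcircle Linf" for z unfolding q_def by (rule pt_in[OF Linfpos])
  have pm: "pseudometric_on (rcircle (L 0)) (delta L pr)"
    unfolding pseudometric_on_def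
  proof (intro conjI ballI)
    fix x assume x: "x \<in> rcircle (L 0)"
    show "delta L pr x x = 0" unfolding deltaq[OF x x] q_def by (rule cdist_self[OF Linfpos pt_ne0[OF Linfpos]])
  next
    fix x y assume x: "x \<in> rcircle (L 0)" and y: "y \<in> rcircle (L 0)"
    show "0 \<le> delta L pr x y" unfolding deltaq[OF x y] q_def pt_cdist[OF Linfpos] by (rule cd_nonneg[OF Linfpos])
    show "delta L pr x y = delta L pr y x" unfolding deltaq[OF x y] deltaq[OF y x] by (rule cdist_sym[OF Linfpos qin qin])
  next
    fix x y z assume x: "x \<in> rcircle (L 0)" and y: "y \<in> rcircle (L 0)" and z: "z \<in> rcircle (L 0)"
    show "delta L pr x z \<le> delta L pr x y + delta L pr y z"
      unfolding deltaq[OF x z] deltaq[OF x y] deltaq[OF y z] q_def pt_cdist[OF Linfpos]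
      using cd_triangle[OF Linfpos, of "Phi (xc x) - Phi (xc y)" "Phi (xc y) - Phi (xc z)"] by simp
  qed
  have surj: "q ` rcircle (L 0) = rcircle Linf"
  proof
    show "q ` rcircle (L 0) \<subseteq> rcircle Linf" using qin by blast
    show "rcircle Linf \<subseteq> q ` rcircle (L 0)"
    proof
      fix w assume w: "w \<in> rcircle Linf"
      obtain v where v: "v \<in> {0..<Linf}" "w = pt Linf v" using circle_pt01[OF Linfpos w] by blast
      have "1-lipschitz_on {0..L 0} Phi"
      proof (rule lipschitz_onI)
        fix x y assume "x \<in> {0..L 0}" "y \<in> {0..L 0}"
        then show "dist (Phi x) (Phi y) \<le> 1 * dist x y"
          using Phimono[of x y] Phimono[of y x] by (cases "x \<le> y") (auto simp: dist_real_def)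
      qed simp
      then have "continuous_on {0..L 0} Phi" by (rule lipschitz_on_continuous_on)
      then obtain x where x: "0 \<le> x" "x \<le> L 0" "Phi x = v"
        using IVT'[of Phi 0 v "L 0"] Phi0 PhiL v L0 by auto
      have xl: "x < L 0" using x v PhiL by (cases "x = L 0") auto
      define z where "z = pt (L 0) x"
      have z: "z \<in> rcircle (L 0)" unfolding z_def by (rule pt_in[OF L0])
      have h1: "xc z \<in> {0..<L 0}" and h2: "z = pt (L 0) (xc z)" using xc[OF z] by blast+
      have h3: "pt (L 0) (xc z) = pt (L 0) x" using h2 unfolding z_def by (rule sym)
      have "\<bar>xc z - x\<bar> < L 0" using h1 x xl by auto
      then have "xc z = x" by (rule pt_inj[OF L0 h3])
      then have "q z = w" unfolding q_def using x v by simp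
      then show "w \<in> q ` rcircle (L 0)" using z by blast
    qed
  qed
  show ?thesis
  proof (intro conjI ballI)
    fix x y assume "x \<in> rcircle (L 0)" "y \<in> rcircle (L 0)"
    then show "convergent (\<lambda>i. cdist (L i) (pic pr i x) (pic pr i y))"
      using conv unfolding convergent_def by blast
  next
    show "pseudometric_on (rcircle (L 0)) (delta L pr)" by (rule pm)
  next
    show "\<exists>Linf. L \<longlonglongrightarrow> Linf \<and> 0 < Linf \<and> (\<exists>q. q ` rcircle (L 0) = rcircle Linf \<and>
              (\<forall>x\<in>rcircle (L 0). \<forall>y\<in>rcircle (L 0). cdist Linf (q x) (q y) = delta L pr x y))"
      using Llim Linfpos surj deltaq by metis
  qed
qed


end
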